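(* Let $\ell>0$, $M=\mathbb R\times\{x\in\mathbb R^2:|x|<\ell\}$ with coordinates $(t,x^1,x^2)$, $\lambda(x)=\log\frac{2}{1-|x|^2/\ell^2}$ and $\kappa=-\lambda$. Take the Newton-Cartan background $$\tau_\mu dx^\mu=e^{\kappa}dt,\qquad e_\mu{}^adx^\mu=e^{\lambda}dx^a,\qquad m_\mu dx^\mu=\phi\, e^{\kappa}dt\ \text{ with }\ \phi=e^{-\kappa}$$ (so $m_\mu dx^\mu=dt$), and background fields $u=0$, $v=0$, and $v_\mu$ determined by $v_0=0$, $(v^1,v^2)=-\tfrac32\big(x^2/\ell^2,\,-x^1/\ell^2\big)$. Then the system (S$_+$) of Theorem 2 has two linearly independent nowhere-vanishing solutions, namely $\zeta_+=\exp\!\big(\tfrac{\kappa}{2}+\tfrac{\pi}{8}\gamma_0\big)\zeta_0$ for any constant Majorana spinor $\zeta_0\neq0$. Moreover, for this background the boost connection $\omega_\mu{}^a$ vanishes identically.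
   Context: Conventions: $\tau^\mu,e^\mu{}_a$ are the projective inverses ($\tau^\mu\tau_\mu=1$, $\tau^\mu e_\mu{}^a=0$, $e^\mu{}_a\tau_\mu=0$, $e^\mu{}_ae_\mu{}^b=\delta^b_a$); $v_0=\tau^\mu v_\mu$, $v_a=e^\mu{}_av_\mu$, $v^a=v_a$. $\epsilon_{12}=\epsilon^{12}=1$. $\tau_{\mu\nu}=2\partial_{[\mu}\tau_{\nu]}$, $\tau_{ab}=e^\mu{}_ae^\nu{}_b\tau_{\mu\nu}$, $\tau_{0a}=\tau^\mu e^\nu{}_a\tau_{\mu\nu}$, $\tau_{0\mu}=\tau^\nu\tau_{\nu\mu}$, $\tau^{a0}=\tau_{0a}$. Spin connections: $\omega_\mu{}^a = e^{\nu a}\partial_{[\mu}m_{\nu]} - e_\mu{}^be^{\nu a}\tau^\rho\partial_{[\nu}e_{\rho]b} - \tau^\nu\partial_{[\mu}e_{\nu]}{}^a - \tau_\mu e^{\nu a}\tau^\rho\partial_{[\nu}m_{\rho]}$, $\omega_\mu{}^{ab} = 2e^{\nu[a}\partial_{[\mu}e_{\nu]}{}^{b]} - e_\mu{}^ce^{\nu a}e^{\rho b}\partial_{[\nu}e_{\rho]c} - \tau_\mu e^{\nu a}e^{\rho b}\partial_{[\nu}m_{\rho]}$. Gamma matrices: $2\times2$, $\gamma_0^2=-\mathbb1$, $\{\gamma_a,\gamma_b\}=2\delta_{ab}$, $\{\gamma_0,\gamma_a\}=0$, $\gamma^a=\gamma_a$, $\gamma^0=-\gamma_0$, $\gamma_{ab}=\epsilon_{ab}\gamma_0$,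 $\gamma_{a0}=\epsilon_{ab}\gamma_b$; Majorana: $\zeta^*=\mathrm i\mathcal C_3\gamma^0\zeta$ with $\mathcal C_3^T=-\mathcal C_3$, $\gamma^T=-\mathcal C_3\gamma\mathcal C_3^{-1}$. $D_\mu\zeta=\partial_\mu\zeta+\tfrac14\omega_\mu{}^{ab}\gamma_{ab}\zeta$. System (S$_+$) for a commuting Majorana spinor $\zeta_+$: $(4v+\epsilon^{ab}\tau_{ab})\gamma_0\zeta_+=0$; $(\tfrac32\tau^{a0}\gamma_{a0}-\gamma^av_a+\mathrm{Re}(u)\gamma_0-\mathrm{Im}(u))\zeta_+=0$; $(\omega_\mu{}^a\gamma_{a0}+\tfrac13e_\mu{}^av_0\gamma_a)\zeta_+=0$; $D_\mu\zeta_+=(-\tfrac14\tau_{0\mu}-\tfrac12v_\mu\gamma_0+\tfrac16e_\mu{}^av^b\gamma_a\gamma_b\gamma_0+\tfrac13\tau_\mu v_0\gamma_0-\tfrac16\mathrm{Re}(u)e_\mu{}^a\gamma_a-\tfrac16\mathrm{Im}(u)e_\mu{}^a\gamma_{a0})\zeta_+$. *)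

theory Defs
  imports "HOL-Analysis.Analysis"
begin

text \<open>Points of spacetime are triples (t, x1, x2); coordinate indices mu are 0,1,2
  (0 = t); spatial frame indices a are 1,2.\<close>

type_synonym pt = "real \<times> real \<times> real"

definition shift :: "nat \<Rightarrow> real \<Rightarrow> pt \<Rightarrow> pt" where
  "shift \<mu> s p = (case p of (t, x1, x2) \<Rightarrow>
     if \<mu> = 0 then (t + s, x1, x2) else if \<mu> = 1 then (t, x1 + s, x2) else (t, x1, x2 + s))"

definition pd :: "nat \<Rightarrow> (pt \<Rightarrow> real) \<Rightarrow> pt \<Rightarrow> real" where
  "pd \<mu> f p = deriv (\<lambda>s. f (shift \<mu> s p)) 0"

definition dA :: "(nat \<Rightarrow> pt \<Rightarrow> real) \<Rightarrow> nat \<Rightarrow> nat \<Rightarrow> pt \<Rightarrow> real" where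
  "dA X \<mu> \<nu> p = (pd \<mu> (X \<nu>) p - pd \<nu> (X \<mu>) p) / 2"

text \<open>tau mu p = tau_mu, e mu a p = e_mu^a, m mu p = m_mu,
  tu mu p = tau^mu, eu mu a p = e^mu_a.\<close>

definition proj_inverse ::
  "(nat \<Rightarrow> pt \<Rightarrow> real) \<Rightarrow> (nat \<Rightarrow> nat \<Rightarrow> pt \<Rightarrow> real) \<Rightarrow>
   (nat \<Rightarrow> pt \<Rightarrow> real) \<Rightarrow> (nat \<Rightarrow> nat \<Rightarrow> pt \<Rightarrow> real) \<Rightarrow> pt \<Rightarrow> bool" where
  "proj_inverse tau e tu eu p \<longleftrightarrow>
     (\<Sum>\<mu><3. tu \<mu> p * tau \<mu> p) = 1 \<and>
     (\<forall>a\<in>{1,2}. (\<Sum>\<mu><3. tu \<mu> p * e \<mu> a p) = 0) \<and>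
     (\<forall>a\<in>{1,2}. (\<Sum>\<mu><3. eu \<mu> a p * tau \<mu> p) = 0) \<and>
     (\<forall>a\<in>{1,2}. \<forall>b\<in>{1,2}. (\<Sum>\<mu><3. eu \<mu> a p * e \<mu> b p) = (if a = b then 1 else 0))"

definition tauF :: "(nat \<Rightarrow> pt \<Rightarrow> real) \<Rightarrow> nat \<Rightarrow> nat \<Rightarrow> pt \<Rightarrow> real" where
  "tauF tau \<mu> \<nu> p = 2 * dA tau \<mu> \<nu> p"

definition tau_ab :: "(nat \<Rightarrow> pt \<Rightarrow> real) \<Rightarrow> (nat \<Rightarrow> nat \<Rightarrow> pt \<Rightarrow> real) \<Rightarrow> nat \<Rightarrow> nat \<Rightarrow> pt \<Rightarrow> real" where
  "tau_ab tau eu a b p = (\<Sum>\<mu><3. \<Sum>\<nu><3. eu \<mu> a p * eu \<nu> b p * tauF tau \<mu> \<nu> p)"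

definition tau_0a :: "(nat \<Rightarrow> pt \<Rightarrow> real) \<Rightarrow> (nat \<Rightarrow> pt \<Rightarrow> real) \<Rightarrow> (nat \<Rightarrow> nat \<Rightarrow> pt \<Rightarrow> real) \<Rightarrow> nat \<Rightarrow> pt \<Rightarrow> real" where
  "tau_0a tau tu eu a p = (\<Sum>\<mu><3. \<Sum>\<nu><3. tu \<mu> p * eu \<nu> a p * tauF tau \<mu> \<nu> p)"

definition tau_0mu :: "(nat \<Rightarrow> pt \<Rightarrow> real) \<Rightarrow> (nat \<Rightarrow> pt \<Rightarrow> real) \<Rightarrow> nat \<Rightarrow> pt \<Rightarrow> real" where
  "tau_0mu tau tu \<mu> p = (\<Sum>\<nu><3. tu \<nu> p * tauF tau \<nu> \<mu> p)"

definition omega1 ::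
  "(nat \<Rightarrow> pt \<Rightarrow> real) \<Rightarrow> (nat \<Rightarrow> nat \<Rightarrow> pt \<Rightarrow> real) \<Rightarrow> (nat \<Rightarrow> pt \<Rightarrow> real) \<Rightarrow>
   (nat \<Rightarrow> pt \<Rightarrow> real) \<Rightarrow> (nat \<Rightarrow> nat \<Rightarrow> pt \<Rightarrow> real) \<Rightarrow> nat \<Rightarrow> nat \<Rightarrow> pt \<Rightarrow> real" where
  "omega1 tau e m tu eu \<mu> a p =
     (\<Sum>\<nu><3. eu \<nu> a p * dA m \<mu> \<nu> p)
     - (\<Sum>b\<in>{1,2}. \<Sum>\<nu><3. \<Sum>\<rho><3. e \<mu> b p * eu \<nu> a p * tu \<rho> p * dA (\<lambda>\<sigma>. e \<sigma> b) \<nu> \<rho> p)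
     - (\<Sum>\<nu><3. tu \<nu> p * dA (\<lambda>\<sigma>. e \<sigma> a) \<mu> \<nu> p)
     - tau \<mu> p * (\<Sum>\<nu><3. \<Sum>\<rho><3. eu \<nu> a p * tu \<rho> p * dA m \<nu> \<rho> p)"

text \<open>rotation connection omega_mu^{ab}; 2 X^{[ab]} = X^{ab} - X^{ba}\<close>
definition omega2 ::
  "(nat \<Rightarrow> pt \<Rightarrow> real) \<Rightarrow> (nat \<Rightarrow> nat \<Rightarrow> pt \<Rightarrow> real) \<Rightarrow> (nat \<Rightarrow> pt \<Rightarrow> real) \<Rightarrow>
   (nat \<Rightarrow> nat \<Rightarrow> pt \<Rightarrow> real) \<Rightarrow> nat \<Rightarrow> nat \<Rightarrow> nat \<Rightarrow> pt \<Rightarrow> real" where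
  "omega2 tau e m eu \<mu> a b p =
     (\<Sum>\<nu><3. eu \<nu> a p * dA (\<lambda>\<sigma>. e \<sigma> b) \<mu> \<nu> p - eu \<nu> b p * dA (\<lambda>\<sigma>. e \<sigma> a) \<mu> \<nu> p)
     - (\<Sum>c\<in>{1,2}. \<Sum>\<nu><3. \<Sum>\<rho><3. e \<mu> c p * eu \<nu> a p * eu \<rho> b p * dA (\<lambda>\<sigma>. e \<sigma> c) \<nu> \<rho> p)
     - tau \<mu> p * (\<Sum>\<nu><3. \<Sum>\<rho><3. eu \<nu> a p * eu \<rho> b p * dA m \<nu> \<rho> p)"

type_synonym spinor = "complex^2"
type_synonym cmat = "complex^2^2"

definition gam :: "nat \<Rightarrow> cmat" where
  "gam i = (if i = 0 then vector [vector [0, -1], vector [1, 0]]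
            else if i = 1 then vector [vector [0, 1], vector [1, 0]]
            else vector [vector [1, 0], vector [0, -1]])"

definition gam2 :: "nat \<Rightarrow> nat \<Rightarrow> cmat" where
  "gam2 i j = (1/2::real) *\<^sub>R (gam i ** gam j - gam j ** gam i)"

definition C3 :: cmat where
  "C3 = vector [vector [0, 1], vector [-1, 0]]"

definition gam_up0 :: cmat where "gam_up0 = - gam 0"

definition vconj :: "spinor \<Rightarrow> spinor" where
  "vconj z = (\<chi> i. cnj (z $ i))"

definition majorana :: "spinor \<Rightarrow> bool" where
  "majorana z \<longleftrightarrow> vconj z = \<i> *s ((C3 ** gam_up0) *v z)"

primrec mpow :: "cmat \<Rightarrow> nat \<Rightarrow> cmat" where
  "mpow A 0 = mat 1"
| "mpow A (Suc n) = A ** mpow A n"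

definition mexp :: "cmat \<Rightarrow> cmat" where
  "mexp A = (\<Sum>n. (1 / fact n :: real) *\<^sub>R mpow A n)"

definition Splus_solution ::
  "pt set \<Rightarrow> (nat \<Rightarrow> pt \<Rightarrow> real) \<Rightarrow> (nat \<Rightarrow> nat \<Rightarrow> pt \<Rightarrow> real) \<Rightarrow> (nat \<Rightarrow> pt \<Rightarrow> real) \<Rightarrow>
   (nat \<Rightarrow> pt \<Rightarrow> real) \<Rightarrow> (nat \<Rightarrow> nat \<Rightarrow> pt \<Rightarrow> real) \<Rightarrow>
   (pt \<Rightarrow> complex) \<Rightarrow> (pt \<Rightarrow> real) \<Rightarrow> (nat \<Rightarrow> pt \<Rightarrow> real) \<Rightarrow> (pt \<Rightarrow> spinor) \<Rightarrow> bool" where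
  "Splus_solution Mset tau e m tu eu u v vf \<zeta> \<longleftrightarrow>
    (\<forall>p\<in>Mset.
      let v0 = (\<Sum>\<mu><3. tu \<mu> p * vf \<mu> p);
          va = (\<lambda>a. \<Sum>\<mu><3. eu \<mu> a p * vf \<mu> p)
      in
      majorana (\<zeta> p) \<and>
      ((4 * v p + (tau_ab tau eu 1 2 p - tau_ab tau eu 2 1 p)) *\<^sub>R gam 0) *v \<zeta> p = 0 \<and>
      ((\<Sum>a\<in>{1,2}. (3/2 * tau_0a tau tu eu a p) *\<^sub>R gam2 a 0)
        - (\<Sum>a\<in>{1,2}. va a *\<^sub>R gam a)
        + Re (u p) *\<^sub>R gam 0 - Im (u p) *\<^sub>R mat 1) *v \<zeta> p = 0 \<and>
      (\<forall>\<mu><3. ((\<Sum>a\<in>{1,2}. omega1 tau e m tu eu \<mu> a p *\<^sub>R gam2 a 0)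
               + (\<Sum>a\<in>{1,2}. (1/3 * e \<mu> a p * v0) *\<^sub>R gam a)) *v \<zeta> p = 0) \<and>
      (\<forall>\<mu><3. ((\<lambda>s. \<zeta> (shift \<mu> s p)) has_vector_derivative
          ((( - (1/4 * tau_0mu tau tu \<mu> p)) *\<^sub>R mat 1
            - (1/2 * vf \<mu> p) *\<^sub>R gam 0
            + (\<Sum>a\<in>{1,2}. \<Sum>b\<in>{1,2}. (1/6 * e \<mu> a p * va b) *\<^sub>R (gam a ** gam b ** gam 0))
            + (1/3 * tau \<mu> p * v0) *\<^sub>R gam 0
            - (1/6 * Re (u p)) *\<^sub>R (\<Sum>a\<in>{1,2}. e \<mu> a p *\<^sub>R gam a)
            - (1/6 * Im (u p)) *\<^sub>R (\<Sum>a\<in>{1,2}. e \<mu> a p *\<^sub>R gam2 a 0)) *v \<zeta> p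
           - ((1/4::real) *\<^sub>R (\<Sum>a\<in>{1,2}. \<Sum>b\<in>{1,2}. omega2 tau e m eu \<mu> a b p *\<^sub>R gam2 a b)) *v \<zeta> p))
        (at 0)))"

definition Mdom :: "real \<Rightarrow> pt set" where
  "Mdom l = {(t, x1, x2). x1^2 + x2^2 < l^2}"

definition lamB :: "real \<Rightarrow> pt \<Rightarrow> real" where
  "lamB l p = (case p of (t, x1, x2) \<Rightarrow> ln (2 / (1 - (x1^2 + x2^2) / l^2)))"

definition kapB :: "real \<Rightarrow> pt \<Rightarrow> real" where
  "kapB l p = - lamB l p"

definition phiB :: "real \<Rightarrow> pt \<Rightarrow> real" where
  "phiB l p = exp (- kapB l p)"

definition tauB :: "real \<Rightarrow> nat \<Rightarrow> pt \<Rightarrow> real" where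
  "tauB l \<mu> p = (if \<mu> = 0 then exp (kapB l p) else 0)"

definition eB :: "real \<Rightarrow> nat \<Rightarrow> nat \<Rightarrow> pt \<Rightarrow> real" where
  "eB l \<mu> a p = (if \<mu> = a then exp (lamB l p) else 0)"

definition mB :: "real \<Rightarrow> nat \<Rightarrow> pt \<Rightarrow> real" where
  "mB l \<mu> p = (if \<mu> = 0 then phiB l p * exp (kapB l p) else 0)"

definition zeta_plus :: "real \<Rightarrow> spinor \<Rightarrow> pt \<Rightarrow> spinor" where
  "zeta_plus l \<zeta>0 p = mexp ((kapB l p / 2) *\<^sub>R mat 1 + (pi / 8) *\<^sub>R gam 0) *v \<zeta>0"

end

theory Submission
  imports Defs
begin


lemma lam_deriv1:
  assumes "l > 0" "x1^2+x2^2 < l^2"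
  shows "((\<lambda>s. lamB l (shift 1 s (t,x1,x2))) has_real_derivative
      (2*x1/(l^2 - (x1^2+x2^2)))) (at 0)"
proof -
  have D: "1 - (x1^2+x2^2)/l^2 > 0" "l^2 - (x1^2+x2^2) > 0" using assms by (simp_all add: field_simps)
  have e: "1 - (x1^2+x2^2)/l^2 = (l^2-(x1^2+x2^2))/l^2" using assms by (simp add: field_simps)
  show ?thesis
    unfolding lamB_def shift_def
    apply simp
    apply (rule derivative_eq_intros)
      apply (use D in simp)
    apply (rule derivative_eq_intros refl)+
     apply (use D assms in simp)
    apply (rule refl, rule refl)
      apply (use D in simp)
     apply (rule refl)
    using D assms by (simp add: e)
qed

lemma lam_deriv2:
  assumes "l > 0" "x1^2+x2^2 < l^2"
  shows "((\<lambda>s. lamB l (shift 2 s (t,x1,x2))) has_real_derivative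
      (2*x2/(l^2 - (x1^2+x2^2)))) (at 0)"
proof -
  have D: "1 - (x1^2+x2^2)/l^2 > 0" "l^2 - (x1^2+x2^2) > 0" using assms by (simp_all add: field_simps)
  have e: "1 - (x1^2+x2^2)/l^2 = (l^2-(x1^2+x2^2))/l^2" using assms by (simp add: field_simps)
  show ?thesis
    unfolding lamB_def shift_def
    apply simp
    apply (rule derivative_eq_intros)
      apply (use D in simp)
    apply (rule derivative_eq_intros refl)+
     apply (use D assms in simp)
    apply (rule refl, rule refl)
      apply (use D in simp)
     apply (rule refl)
    using D assms by (simp add: e)
qed

lemma lam_deriv0:
  shows "((\<lambda>s. lamB l (shift 0 s (t,x1,x2))) has_real_derivative 0) (at 0)"
  unfolding lamB_def shift_def by simp


definition dlam :: "real \<Rightarrow> nat \<Rightarrow> pt \<Rightarrow> real" where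
  "dlam l \<mu> p = (case p of (t,x1,x2) \<Rightarrow> if \<mu> = 0 then 0 else if \<mu> = 1 then 2*x1/(l^2 - (x1^2+x2^2))
      else 2*x2/(l^2 - (x1^2+x2^2)))"

lemma lam_deriv:
  assumes "l > 0" "p \<in> Mdom l"
  shows "((\<lambda>s. lamB l (shift \<mu> s p)) has_real_derivative dlam l \<mu> p) (at 0)"
proof -
  obtain t x1 x2 where p: "p = (t,x1,x2)" by (cases p) auto
  have r: "x1^2+x2^2 < l^2" using assms(2) p by (simp add: Mdom_def)
  consider "\<mu> = 0" | "\<mu> = 1" | "\<mu> \<noteq> 0 \<and> \<mu> \<noteq> 1" by blast
  then show ?thesis
  proof cases
    case 1 then show ?thesis using lam_deriv0[of l t x1 x2] by (simp add: p dlam_def)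
  next
    case 2 then show ?thesis using lam_deriv1[OF assms(1) r, of t] by (simp add: p dlam_def)
  next
    case 3
    have "shift \<mu> s p = shift 2 s p" for s using 3 by (simp add: shift_def p)
    then show ?thesis using lam_deriv2[OF assms(1) r, of t] 3 by (simp add: p dlam_def)
  qed
qed

lemma shift0: "shift \<mu> 0 p = p" by (cases p) (simp add: shift_def)

lemma pd_explam:
  assumes "l > 0" "p \<in> Mdom l"
  shows "pd \<mu> (\<lambda>q. exp (lamB l q)) p = exp (lamB l p) * dlam l \<mu> p"
  unfolding pd_def
  apply (rule DERIV_imp_deriv)
  using DERIV_chain2[OF DERIV_exp lam_deriv[OF assms, of \<mu>]]
  by (simp add: shift0)

lemma pd_expkap:
  assumes "l > 0" "p \<in> Mdom l"
  shows "pd \<mu> (\<lambda>q. exp (kapB l q)) p = - exp (kapB l p) * dlam l \<mu> p"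
  unfolding pd_def kapB_def
  apply (rule DERIV_imp_deriv)
  using DERIV_chain2[OF DERIV_exp DERIV_minus[OF lam_deriv[OF assms, of \<mu>]]]
  by (simp add: shift0)

lemma pd_const: "pd \<mu> (\<lambda>q. c) p = 0"
  unfolding pd_def by simp

lemma pd_tauB:
  assumes "l > 0" "p \<in> Mdom l"
  shows "pd \<mu> (tauB l \<nu>) p = (if \<nu> = 0 then - exp (kapB l p) * dlam l \<mu> p else 0)"
proof -
  have "tauB l \<nu> = (if \<nu> = 0 then (\<lambda>q. exp (kapB l q)) else (\<lambda>q. 0))"
    by (auto simp: tauB_def)
  then show ?thesis using pd_expkap[OF assms] pd_const by simp
qed

lemma pd_eB:
  assumes "l > 0" "p \<in> Mdom l"
  shows "pd \<mu> (eB l \<nu> b) p = (if \<nu> = b then exp (lamB l p) * dlam l \<mu> p else 0)"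
proof -
  have "eB l \<nu> b = (if \<nu> = b then (\<lambda>q. exp (lamB l q)) else (\<lambda>q. 0))"
    by (auto simp: eB_def)
  then show ?thesis using pd_explam[OF assms] pd_const by simp
qed

lemma pd_mB: "pd \<mu> (mB l \<nu>) p = 0"
proof -
  have "mB l \<nu> = (if \<nu> = 0 then (\<lambda>q. 1) else (\<lambda>q. 0))"
    by (auto simp: mB_def phiB_def exp_minus field_simps)
  then show ?thesis using pd_const by simp
qed


lemma sum3: "(\<Sum>\<mu><(3::nat). f \<mu>) = f 0 + f 1 + (f 2 :: 'a::comm_monoid_add)"
  by (simp add: numeral_3_eq_3 add.commute add.left_commute numeral_2_eq_2)

lemma scalars:
  fixes tu :: "nat \<Rightarrow> pt \<Rightarrow> real" and eu :: "nat \<Rightarrow> nat \<Rightarrow> pt \<Rightarrow> real" and vf :: "nat \<Rightarrow> pt \<Rightarrow> real"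
  assumes l: "l > 0" and pM: "p \<in> Mdom l" and p: "p = (t,x1,x2)"
    and inv: "proj_inverse (tauB l) (eB l) tu eu p"
    and v0: "(\<Sum>\<mu><3. tu \<mu> p * vf \<mu> p) = 0"
    and v1: "(\<Sum>\<mu><3. eu \<mu> 1 p * vf \<mu> p) = - 3/2 * (x2 / l^2)"
    and v2: "(\<Sum>\<mu><3. eu \<mu> 2 p * vf \<mu> p) = - 3/2 * (- x1 / l^2)"
  defines "E \<equiv> exp (lamB l p)" and "d1 \<equiv> dlam l 1 p" and "d2 \<equiv> dlam l 2 p"
  shows "tu 0 p = E" "tu 1 p = 0" "tu 2 p = 0"
    "eu 0 1 p = 0" "eu 0 2 p = 0" "eu 1 1 p = 1/E" "eu 2 2 p = 1/E" "eu 1 2 p = 0" "eu 2 1 p = 0"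
    "E > 0" "exp (kapB l p) = 1/E" "E * x1 / l^2 = d1" "E * x2 / l^2 = d2"
    "vf 0 p = 0" "vf 1 p = - 3/2 * d2" "vf 2 p = 3/2 * d1"
proof -
  have r: "x1^2+x2^2 < l^2" using pM p by (simp add: Mdom_def)
  have N: "l^2 - (x1^2+x2^2) > 0" using r by simp
  show E0: "E > 0" by (simp add: E_def)
  show K: "exp (kapB l p) = 1/E" by (simp add: E_def kapB_def exp_minus field_simps)
  have Ev: "E = 2 * l^2 / (l^2 - (x1^2+x2^2))"
  proof -
    have q: "2 / (1 - (x1^2+x2^2)/l^2) > 0" using r l by (simp add: field_simps)
    have "E = 2 / (1 - (x1^2+x2^2)/l^2)" unfolding E_def lamB_def p using q by simp
    then show ?thesis using l N by (simp add: field_simps)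
  qed
  have aux: "2*l^2/n * x / l^2 = 2*x/n" for n x using l by (cases "n=0") (simp_all add: field_simps)
  show "E * x1 / l^2 = d1" "E * x2 / l^2 = d2" unfolding Ev d1_def d2_def dlam_def p
    using aux by auto
  have tau: "tauB l 0 p = 1/E" "tauB l (Suc 0) p = 0" "tauB l 2 p = 0" using K by (auto simp: tauB_def)
  have e: "eB l \<mu> a p = (if \<mu> = a then E else 0)" for \<mu> a by (simp add: eB_def E_def)
  from inv have I1: "tu 0 p * (1/E) + tu 1 p * 0 + tu 2 p * 0 = 1"
    and I2: "\<forall>a\<in>{1,2}. tu 0 p * eB l 0 a p + tu 1 p * eB l 1 a p + tu 2 p * eB l 2 a p = 0"
    and I3: "\<forall>a\<in>{1,2}. eu 0 a p * (1/E) + eu 1 a p * 0 + eu 2 a p * 0 = 0"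
    and I4: "\<forall>a\<in>{1,2}. \<forall>b\<in>{1,2}. eu 0 a p * eB l 0 b p + eu 1 a p * eB l 1 b p + eu 2 a p * eB l 2 b p = (if a = b then 1 else 0)"
    unfolding proj_inverse_def sum3 using tau by auto
  show t0: "tu 0 p = E" using I1 E0 by (simp add: field_simps)
  show t1: "tu 1 p = 0" "tu 2 p = 0" using I2 E0 by (auto simp: e)
  show u0: "eu 0 1 p = 0" "eu 0 2 p = 0" using I3 E0 by auto
  show u1: "eu 1 1 p = 1/E" "eu 2 2 p = 1/E" "eu 1 2 p = 0" "eu 2 1 p = 0"
    using I4 E0 by (auto simp: e field_simps)
  show "vf 0 p = 0" using v0 t0 t1 E0 by (simp add: sum3)
  have "vf 1 p / E = - 3/2 * (x2 / l^2)" using v1 u0 u1 by (simp add: sum3)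
  then have "vf 1 p = - 3/2 * (E * x2 / l^2)" using E0 by (simp add: field_simps)
  then show "vf 1 p = - 3/2 * d2" using \<open>E * x2 / l^2 = d2\<close> by simp
  have "vf 2 p / E = - 3/2 * (- x1 / l^2)" using v2 u0 u1 by (simp add: sum3)
  then have "vf 2 p = 3/2 * (E * x1 / l^2)" using E0 by (simp add: field_simps)
  then show "vf 2 p = 3/2 * d1" using \<open>E * x1 / l^2 = d1\<close> by simp
qed


lemma scalars2:
  fixes tu :: "nat \<Rightarrow> pt \<Rightarrow> real" and eu :: "nat \<Rightarrow> nat \<Rightarrow> pt \<Rightarrow> real" and vf :: "nat \<Rightarrow> pt \<Rightarrow> real"
  assumes l: "l > 0" and pM: "p \<in> Mdom l" and p: "p = (t,x1,x2)"
    and inv: "proj_inverse (tauB l) (eB l) tu eu p"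
    and v0: "(\<Sum>\<mu><3. tu \<mu> p * vf \<mu> p) = 0"
    and v1: "(\<Sum>\<mu><3. eu \<mu> 1 p * vf \<mu> p) = - 3/2 * (x2 / l^2)"
    and v2: "(\<Sum>\<mu><3. eu \<mu> 2 p * vf \<mu> p) = - 3/2 * (- x1 / l^2)"
  defines "E \<equiv> exp (lamB l p)" and "d1 \<equiv> dlam l 1 p" and "d2 \<equiv> dlam l 2 p"
  shows "tau_ab (tauB l) eu 1 2 p = 0" "tau_ab (tauB l) eu 2 1 p = 0"
    "tau_0a (tauB l) tu eu 1 p = d1/E" "tau_0a (tauB l) tu eu 2 p = d2/E"
    "tau_0mu (tauB l) tu 0 p = 0" "tau_0mu (tauB l) tu 1 p = d1" "tau_0mu (tauB l) tu 2 p = d2"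
    "\<mu> < 3 \<Longrightarrow> a \<in> {1,2} \<Longrightarrow> omega1 (tauB l) (eB l) (mB l) tu eu \<mu> a p = 0"
    "a \<in> {1,2} \<Longrightarrow> b \<in> {1,2} \<Longrightarrow> omega2 (tauB l) (eB l) (mB l) eu 0 a b p = 0"
    "omega2 (tauB l) (eB l) (mB l) eu \<mu> a a p = 0"
    "omega2 (tauB l) (eB l) (mB l) eu 1 1 2 p = d2"
    "omega2 (tauB l) (eB l) (mB l) eu 1 2 1 p = - d2"
    "omega2 (tauB l) (eB l) (mB l) eu 2 1 2 p = - d1"
    "omega2 (tauB l) (eB l) (mB l) eu 2 2 1 p = d1"
proof -
  note S = scalars[where tu=tu and eu=eu and vf=vf, OF l pM p inv v0 v1 v2, folded E_def d1_def d2_def]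
  have Enz: "E \<noteq> 0" using S by simp
  have d0: "dlam l 0 p = 0" by (simp add: dlam_def p)
  have eB0: "eB l \<mu> a p = (if \<mu> = a then E else 0)" for \<mu> a by (simp add: eB_def E_def)
  have tB: "tauB l \<mu> p = (if \<mu> = 0 then 1/E else 0)" for \<mu> using S by (simp add: tauB_def)
  note P = pd_tauB[OF l pM] pd_eB[OF l pM] pd_mB tauF_def dA_def sum3 S d0 eB0 tB
    E_def[symmetric] d1_def[symmetric] d2_def[symmetric] S[unfolded One_nat_def] Enz d1_def[symmetric, unfolded One_nat_def]
  show "tau_ab (tauB l) eu 1 2 p = 0" "tau_ab (tauB l) eu 2 1 p = 0"
    by (simp_all add: tau_ab_def P)
  show "tau_0a (tauB l) tu eu 1 p = d1/E" "tau_0a (tauB l) tu eu 2 p = d2/E"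
    using S by (simp_all add: tau_0a_def P field_simps)
  show "tau_0mu (tauB l) tu 0 p = 0" "tau_0mu (tauB l) tu 1 p = d1" "tau_0mu (tauB l) tu 2 p = d2"
    using S by (simp_all add: tau_0mu_def P field_simps)
  show "\<mu> < 3 \<Longrightarrow> a \<in> {1,2} \<Longrightarrow> omega1 (tauB l) (eB l) (mB l) tu eu \<mu> a p = 0"
    by (auto simp: omega1_def P)
  show "a \<in> {1,2} \<Longrightarrow> b \<in> {1,2} \<Longrightarrow> omega2 (tauB l) (eB l) (mB l) eu 0 a b p = 0"
    by (auto simp add: omega2_def P)
  show "omega2 (tauB l) (eB l) (mB l) eu \<mu> a a p = 0"
    by (simp add: omega2_def P)
  show "omega2 (tauB l) (eB l) (mB l) eu 1 1 2 p = d2"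
    "omega2 (tauB l) (eB l) (mB l) eu 1 2 1 p = - d2"
    "omega2 (tauB l) (eB l) (mB l) eu 2 1 2 p = - d1"
    "omega2 (tauB l) (eB l) (mB l) eu 2 2 1 p = d1"
    using S by (simp_all add: omega2_def P field_simps)
qed



lemma mat1_ent: "(mat 1 :: cmat) $ 1 $ 1 = 1" "(mat 1 :: cmat) $ 1 $ 2 = 0"
   "(mat 1 :: cmat) $ 2 $ 1 = 0" "(mat 1 :: cmat) $ 2 $ 2 = 1"
  by (simp_all add: mat_def)

lemma gam_ent:
  "gam 0 $ 1 $ 1 = 0" "gam 0 $ 1 $ 2 = -1" "gam 0 $ 2 $ 1 = 1" "gam 0 $ 2 $ 2 = 0"
  "gam 1 $ 1 $ 1 = 0" "gam 1 $ 1 $ 2 = 1" "gam 1 $ 2 $ 1 = 1" "gam 1 $ 2 $ 2 = 0"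
  "gam 2 $ 1 $ 1 = 1" "gam 2 $ 1 $ 2 = 0" "gam 2 $ 2 $ 1 = 0" "gam 2 $ 2 $ 2 = -1"
  by (simp_all add: gam_def)

lemmas ENT = mat1_ent gam_ent gam_ent[unfolded One_nat_def] vec_eq_iff forall_2 matrix_matrix_mult_def sum_2

lemma cscale: "(r::real) *\<^sub>R (z::complex) = complex_of_real r * z"
  by (simp add: scaleR_conv_of_real)

lemma G1: "gam2 1 0 = gam 2" "gam2 2 0 = - gam 1" "gam2 1 2 = gam 0" "gam2 2 1 = - gam 0"
   "gam2 1 1 = 0" "gam2 2 2 = 0"
  by (simp_all add: gam2_def ENT cscale)

lemma G2: "gam 1 ** gam 1 ** gam 0 = gam 0" "gam 2 ** gam 2 ** gam 0 = gam 0"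
  "gam 1 ** gam 2 ** gam 0 = - mat 1" "gam 2 ** gam 1 ** gam 0 = mat 1"
  "gam 0 ** gam 0 = - mat 1"
  by (simp_all add: ENT)



definition Mc :: "complex \<Rightarrow> cmat" where
  "Mc z = Re z *\<^sub>R mat 1 + Im z *\<^sub>R gam 0"

lemma Mc_mult: "Mc z ** Mc w = Mc (z*w)"
  by (simp add: Mc_def ENT cscale complex_eq_iff algebra_simps)

lemma mpow_Mc: "mpow (Mc z) n = Mc (z^n)"
  by (induction n) (simp_all add: Mc_mult, simp add: Mc_def)

lemma mexp_Mc: "mexp (Mc z) = Mc (exp z)"
proof -
  have s: "(\<lambda>n. z ^ n /\<^sub>R fact n) sums exp z" by (rule exp_converges)
  have "(\<lambda>n. Re (z ^ n /\<^sub>R fact n) *\<^sub>R (mat 1::cmat) + Im (z ^ n /\<^sub>R fact n) *\<^sub>R gam 0) sums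
        (Re (exp z) *\<^sub>R mat 1 + Im (exp z) *\<^sub>R gam 0)"
    by (intro sums_add sums_scaleR_left sums_Re sums_Im s)
  moreover have "(1 / fact n :: real) *\<^sub>R mpow (Mc z) n =
     Re (z ^ n /\<^sub>R fact n) *\<^sub>R (mat 1::cmat) + Im (z ^ n /\<^sub>R fact n) *\<^sub>R gam 0" for n
    unfolding mpow_Mc by (simp add: Mc_def scaleR_add_right divide_inverse_commute)
  ultimately show ?thesis unfolding mexp_def Mc_def[of "exp z"] by (simp add: sums_iff)
qed

lemma mexp_form: "mexp (a *\<^sub>R mat 1 + b *\<^sub>R gam 0) = exp a *\<^sub>R (cos b *\<^sub>R mat 1 + sin b *\<^sub>R gam 0)"
proof -
  have e: "a *\<^sub>R mat 1 + b *\<^sub>R gam 0 = Mc (Complex a b)" by (simp add: Mc_def)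
  show ?thesis apply (simp only: e mexp_Mc) by (simp add: Mc_def Re_exp Im_exp scaleR_add_right)
qed


definition W :: "spinor \<Rightarrow> spinor" where
  "W z = (cos (pi/8) *\<^sub>R mat 1 + sin (pi/8) *\<^sub>R gam 0) *v z"

lemma scaleR_mv: "((k::real) *\<^sub>R (A::cmat)) *v v = k *\<^sub>R (A *v v)"
  by (simp add: vec_eq_iff matrix_vector_mult_def scaleR_sum_right)

lemma zeta_form: "zeta_plus l z q = exp (kapB l q / 2) *\<^sub>R W z"
  unfolding zeta_plus_def mexp_form W_def by (rule scaleR_mv)

lemma W_comp: "W z $ 1 = cos (pi/8) * z $ 1 - sin (pi/8) * z $ 2"
  "W z $ 2 = sin (pi/8) * z $ 1 + cos (pi/8) * z $ 2"
  by (simp_all add: W_def matrix_vector_mult_def sum_2 ENT cscale)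

lemma majorana_iff: "majorana z \<longleftrightarrow> cnj (z $ 1) = - \<i> * z $ 1 \<and> cnj (z $ 2) = - \<i> * z $ 2"
  by (simp add: majorana_def vconj_def C3_def gam_up0_def ENT matrix_vector_mult_def
        vec_eq_iff forall_2 sum_2)

lemma majorana_zeta: "majorana z \<Longrightarrow> majorana (zeta_plus l z q)"
  unfolding majorana_iff zeta_form
  by (simp add: W_comp cscale algebra_simps)

lemma W_nz: "z \<noteq> 0 \<Longrightarrow> W z \<noteq> 0"
proof
  assume nz: "z \<noteq> 0" and w: "W z = 0"
  let ?c = "complex_of_real (cos (pi/8))" and ?s = "complex_of_real (sin (pi/8))"
  have e1: "?c * z$1 - ?s * z$2 = 0" "?s * z$1 + ?c * z$2 = 0"
    using w W_comp[of z] by (simp_all add: vec_eq_iff)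
  have cs: "?c * ?c + ?s * ?s = 1"
    by (metis of_real_add of_real_mult of_real_1 sin_cos_squared_add3 add.commute)
  have "z$1 = (?c * ?c + ?s * ?s) * z$1" using cs by simp
  also have "\<dots> = ?c * (?c * z$1 - ?s * z$2) + ?s * (?s * z$1 + ?c * z$2)" by (simp add: algebra_simps)
  finally have z1: "z$1 = 0" using e1 by simp
  have "z$2 = (?c * ?c + ?s * ?s) * z$2" using cs by simp
  also have "\<dots> = ?c * (?s * z$1 + ?c * z$2) - ?s * (?c * z$1 - ?s * z$2)" by (simp add: algebra_simps)
  finally have z2: "z$2 = 0" using e1 by simp
  show False using nz z1 z2 by (simp add: vec_eq_iff forall_2)
qed

lemma zeta_nz: "z \<noteq> 0 \<Longrightarrow> zeta_plus l z q \<noteq> 0"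
  unfolding zeta_form using W_nz by simp


lemma rot_zero:
  fixes a b cc ss :: real
  assumes cs: "cc * cc + ss * ss = 1" and e: "a * cc - b * ss = 0" "a * ss + b * cc = 0"
  shows "a = 0 \<and> b = 0"
proof -
  have "a = a * (cc * cc+ss * ss)" using cs by simp
  also have "\<dots> = cc * (a * cc - b * ss) + ss * (a * ss + b * cc)" by (simp add: algebra_simps)
  finally have A: "a = 0" using e by simp
  have "b = b * (cc * cc+ss * ss)" using cs by simp
  also have "\<dots> = cc * (a * ss + b * cc) - ss * (a * cc - b * ss)" by (simp add: algebra_simps)
  finally have "b = 0" using e by simp
  with A show ?thesis by simp
qed

lemma indep:
  assumes l: "l > 0"
  shows "\<exists>\<zeta>0 \<zeta>1. majorana \<zeta>0 \<and> \<zeta>0 \<noteq> 0 \<and> majorana \<zeta>1 \<and> \<zeta>1 \<noteq> 0 \<and>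
            (\<forall>a b :: real. (\<forall>p\<in>Mdom l. a *\<^sub>R zeta_plus l \<zeta>0 p + b *\<^sub>R zeta_plus l \<zeta>1 p = 0)
               \<longrightarrow> a = 0 \<and> b = 0)"
proof (intro exI conjI allI impI)
  let ?z0 = "vector [1 + \<i>, 0] :: spinor" and ?z1 = "vector [0, 1 + \<i>] :: spinor"
  show "majorana ?z0" "majorana ?z1" by (simp_all add: majorana_iff vector_1 vector_2 algebra_simps)
  show "?z0 \<noteq> 0" "?z1 \<noteq> 0" by (simp_all add: vec_eq_iff forall_2 vector_1 vector_2 complex_eq_iff)
  fix a b :: real
  assume h: "\<forall>p\<in>Mdom l. a *\<^sub>R zeta_plus l ?z0 p + b *\<^sub>R zeta_plus l ?z1 p = 0"
  have "(0,0,0) \<in> Mdom l" using l by (simp add: Mdom_def)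
  with h have "a *\<^sub>R zeta_plus l ?z0 (0,0,0) + b *\<^sub>R zeta_plus l ?z1 (0,0,0) = 0" by blast
  then have "exp (kapB l (0,0,0) / 2) *\<^sub>R (a *\<^sub>R W ?z0 + b *\<^sub>R W ?z1) = 0"
    unfolding zeta_form by (simp add: scaleR_add_right mult.commute)
  then have w: "a *\<^sub>R W ?z0 + b *\<^sub>R W ?z1 = 0" by simp
  let ?c = "cos (pi/8)" and ?s = "sin (pi/8)"
  have "Re ((a *\<^sub>R W ?z0 + b *\<^sub>R W ?z1) $ 1) = 0" "Re ((a *\<^sub>R W ?z0 + b *\<^sub>R W ?z1) $ 2) = 0"
    using w by simp_all
  then have e: "a * ?c - b * ?s = 0" "a * ?s + b * ?c = 0"
    by (simp_all add: W_comp vector_1 vector_2 algebra_simps)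
  have cs: "?c * ?c + ?s * ?s = 1" by (metis sin_cos_squared_add3 add.commute)
  from rot_zero[OF cs e] show "a = 0" "b = 0" by auto
qed



lemma all3: "(\<forall>\<mu><(3::nat). P \<mu>) \<longleftrightarrow> P 0 \<and> P 1 \<and> P 2"
  by (auto simp: less_Suc_eq numeral_3_eq_3 numeral_2_eq_2)

lemma point:
  fixes tu :: "nat \<Rightarrow> pt \<Rightarrow> real" and eu :: "nat \<Rightarrow> nat \<Rightarrow> pt \<Rightarrow> real" and vf :: "nat \<Rightarrow> pt \<Rightarrow> real"
  assumes l: "l > 0" and pM: "p \<in> Mdom l" and p: "p = (t,x1,x2)"
    and inv: "proj_inverse (tauB l) (eB l) tu eu p"
    and v0: "(\<Sum>\<mu><3. tu \<mu> p * vf \<mu> p) = 0"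
    and v1: "(\<Sum>\<mu><3. eu \<mu> 1 p * vf \<mu> p) = - 3/2 * (x2 / l^2)"
    and v2: "(\<Sum>\<mu><3. eu \<mu> 2 p * vf \<mu> p) = - 3/2 * (- x1 / l^2)"
    and mz: "majorana z"
  defines "\<zeta> \<equiv> zeta_plus l z"
  shows "((4 * 0 + (tau_ab (tauB l) eu 1 2 p - tau_ab (tauB l) eu 2 1 p)) *\<^sub>R gam 0) *v \<zeta> p = 0"
   and "((\<Sum>a\<in>{1,2}. (3/2 * tau_0a (tauB l) tu eu a p) *\<^sub>R gam2 a 0)
        - (\<Sum>a\<in>{1,2}. (\<Sum>\<mu><3. eu \<mu> a p * vf \<mu> p) *\<^sub>R gam a)
        + Re 0 *\<^sub>R gam 0 - Im 0 *\<^sub>R mat 1) *v \<zeta> p = 0"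
proof -
  define E where "E = exp (lamB l p)"
  define d1 where "d1 = dlam l 1 p"
  define d2 where "d2 = dlam l 2 p"
  note S = scalars[where tu=tu and eu=eu and vf=vf, OF l pM p inv v0 v1 v2, folded E_def d1_def d2_def]
  note S2 = scalars2[where tu=tu and eu=eu and vf=vf, OF l pM p inv v0 v1 v2, folded E_def d1_def d2_def]
  have Enz: "E \<noteq> 0" using S by simp
  have x2e: "x2 / l^2 = d2 / E" by (simp add: S(13)[symmetric] Enz)
  have x1e: "x1 / l^2 = d1 / E" by (simp add: S(12)[symmetric] Enz)
  have va1: "(\<Sum>\<mu><3. eu \<mu> 1 p * vf \<mu> p) = - 3/2 * (d2 / E)"
    using v1 unfolding x2e .
  have va2: "(\<Sum>\<mu><3. eu \<mu> 2 p * vf \<mu> p) = 3/2 * (d1 / E)"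
    using v2 unfolding minus_divide_left[symmetric] x1e by simp
  show "((4 * 0 + (tau_ab (tauB l) eu 1 2 p - tau_ab (tauB l) eu 2 1 p)) *\<^sub>R gam 0) *v \<zeta> p = 0"
    using S2 by simp
  have "((\<Sum>a\<in>{1,2}. (3/2 * tau_0a (tauB l) tu eu a p) *\<^sub>R gam2 a 0)
        - (\<Sum>a\<in>{1,2}. (\<Sum>\<mu><3. eu \<mu> a p * vf \<mu> p) *\<^sub>R gam a)
        + Re 0 *\<^sub>R gam 0 - Im 0 *\<^sub>R mat 1) = 0"
    apply (simp add: va1 va2 G1 S2 va1[unfolded One_nat_def] G1[unfolded One_nat_def] S2[unfolded One_nat_def])
    by (simp add: ENT cscale)
  then show "((\<Sum>a\<in>{1,2}. (3/2 * tau_0a (tauB l) tu eu a p) *\<^sub>R gam2 a 0)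
        - (\<Sum>a\<in>{1,2}. (\<Sum>\<mu><3. eu \<mu> a p * vf \<mu> p) *\<^sub>R gam a)
        + Re 0 *\<^sub>R gam 0 - Im 0 *\<^sub>R mat 1) *v \<zeta> p = 0" by simp
qed


lemma matpart:
  fixes tu :: "nat \<Rightarrow> pt \<Rightarrow> real" and eu :: "nat \<Rightarrow> nat \<Rightarrow> pt \<Rightarrow> real" and vf :: "nat \<Rightarrow> pt \<Rightarrow> real"
  assumes l: "l > 0" and pM: "p \<in> Mdom l" and p: "p = (t,x1,x2)"
    and inv: "proj_inverse (tauB l) (eB l) tu eu p"
    and v0: "(\<Sum>\<mu><3. tu \<mu> p * vf \<mu> p) = 0"
    and v1: "(\<Sum>\<mu><3. eu \<mu> 1 p * vf \<mu> p) = - 3/2 * (x2 / l^2)"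
    and v2: "(\<Sum>\<mu><3. eu \<mu> 2 p * vf \<mu> p) = - 3/2 * (- x1 / l^2)"
    and mu: "\<mu> < 3"
  shows "(( - (1/4 * tau_0mu (tauB l) tu \<mu> p)) *\<^sub>R mat 1
            - (1/2 * vf \<mu> p) *\<^sub>R gam 0
            + (\<Sum>a\<in>{1,2}. \<Sum>b\<in>{1,2}. (1/6 * eB l \<mu> a p * (\<Sum>\<mu><3. eu \<mu> b p * vf \<mu> p)) *\<^sub>R (gam a ** gam b ** gam 0))
            + (1/3 * tauB l \<mu> p * (\<Sum>\<mu><3. tu \<mu> p * vf \<mu> p)) *\<^sub>R gam 0
            - (1/6 * Re 0) *\<^sub>R (\<Sum>a\<in>{1,2}. eB l \<mu> a p *\<^sub>R gam a)
            - (1/6 * Im 0) *\<^sub>R (\<Sum>a\<in>{1,2}. eB l \<mu> a p *\<^sub>R gam2 a 0))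
           - ((1/4::real) *\<^sub>R (\<Sum>a\<in>{1,2}. \<Sum>b\<in>{1,2}. omega2 (tauB l) (eB l) (mB l) eu \<mu> a b p *\<^sub>R gam2 a b))
         = (- dlam l \<mu> p / 2) *\<^sub>R mat 1"
proof -
  define E where "E = exp (lamB l p)"
  define d1 where "d1 = dlam l 1 p"
  define d2 where "d2 = dlam l 2 p"
  note S = scalars[where tu=tu and eu=eu and vf=vf, OF l pM p inv v0 v1 v2, folded E_def d1_def d2_def]
  note S2 = scalars2[where tu=tu and eu=eu and vf=vf, OF l pM p inv v0 v1 v2, folded E_def d1_def d2_def]
  have Enz: "E \<noteq> 0" using S by simp
  have x2e: "x2 / l^2 = d2 / E" by (simp add: S(13)[symmetric] Enz)
  have x1e: "x1 / l^2 = d1 / E" by (simp add: S(12)[symmetric] Enz)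
  have va1: "(\<Sum>\<mu><3. eu \<mu> 1 p * vf \<mu> p) = - 3/2 * (d2 / E)"
    using v1 unfolding x2e .
  have va2: "(\<Sum>\<mu><3. eu \<mu> 2 p * vf \<mu> p) = 3/2 * (d1 / E)"
    using v2 unfolding minus_divide_left[symmetric] x1e by simp
  have eB0: "eB l \<mu> a p = (if \<mu> = a then E else 0)" for \<mu> a by (simp add: eB_def E_def)
  have tB: "tauB l \<mu> p = (if \<mu> = 0 then 1/E else 0)" for \<mu> using S by (simp add: tauB_def)
  have d0: "dlam l 0 p = 0" by (simp add: dlam_def p)
  note F = va1 va2 v0 G1 G2 S S2 eB0 tB d0 d1_def[symmetric] d2_def[symmetric]
  note FF = F F[unfolded One_nat_def]
  from mu have "\<mu> = 0 \<or> \<mu> = 1 \<or> \<mu> = 2" by auto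
  then show ?thesis
    apply (elim disjE)
    apply (simp_all add: FF)
    apply (simp_all add: ENT cscale Enz)
    done
qed


lemma zeta_deriv:
  assumes l: "l > 0" and pM: "p \<in> Mdom l"
  shows "((\<lambda>s. zeta_plus l z (shift \<mu> s p)) has_vector_derivative ((- dlam l \<mu> p / 2) *\<^sub>R zeta_plus l z p)) (at 0)"
proof -
  have d0: "((\<lambda>s. - lamB l (shift \<mu> s p) / 2) has_real_derivative (- dlam l \<mu> p / 2)) (at 0)"
    using DERIV_cdivide[OF DERIV_minus[OF lam_deriv[OF l pM, of \<mu>]], of 2] by simp
  have d: "((\<lambda>s. exp (kapB l (shift \<mu> s p) / 2)) has_real_derivative
       exp (kapB l p / 2) * (- dlam l \<mu> p / 2)) (at 0)"
    using DERIV_chain2[OF DERIV_exp d0] by (simp add: kapB_def shift0)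
  have "((\<lambda>s. exp (kapB l (shift \<mu> s p) / 2) *\<^sub>R W z) has_vector_derivative
      (exp (kapB l (shift \<mu> 0 p) / 2) *\<^sub>R 0 + (exp (kapB l p / 2) * (- dlam l \<mu> p / 2)) *\<^sub>R W z)) (at 0)"
    by (rule has_vector_derivative_scaleR[OF d has_vector_derivative_const])
  then show ?thesis unfolding zeta_form by (simp add: mult.commute)
qed

lemma deriv_goal:
  fixes X Y :: cmat
  assumes "X - Y = c *\<^sub>R mat 1" and "(f has_vector_derivative c *\<^sub>R v) F"
  shows "(f has_vector_derivative (X *v v - Y *v v)) F"
proof -
  have "X *v v - Y *v v = c *\<^sub>R v"
    by (simp add: matrix_vector_mult_diff_rdistrib[symmetric] assms(1) scaleR_mv)
  then show ?thesis using assms(2) by simp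
qed

theorem mainTheorem6:
  fixes l :: real
    and tu :: "nat \<Rightarrow> pt \<Rightarrow> real"
    and eu :: "nat \<Rightarrow> nat \<Rightarrow> pt \<Rightarrow> real"
    and vf :: "nat \<Rightarrow> pt \<Rightarrow> real"
  assumes l_pos: "l > 0"
    and inv: "\<forall>p\<in>Mdom l. proj_inverse (tauB l) (eB l) tu eu p"
    and vfield: "\<forall>t x1 x2. (t, x1, x2) \<in> Mdom l \<longrightarrow>
        (\<Sum>\<mu><3. tu \<mu> (t, x1, x2) * vf \<mu> (t, x1, x2)) = 0 \<and>
        (\<Sum>\<mu><3. eu \<mu> 1 (t, x1, x2) * vf \<mu> (t, x1, x2)) = - 3/2 * (x2 / l^2) \<and>
        (\<Sum>\<mu><3. eu \<mu> 2 (t, x1, x2) * vf \<mu> (t, x1, x2)) = - 3/2 * (- x1 / l^2)"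
  shows "(\<forall>\<zeta>0. majorana \<zeta>0 \<and> \<zeta>0 \<noteq> 0 \<longrightarrow>
            Splus_solution (Mdom l) (tauB l) (eB l) (mB l) tu eu (\<lambda>_. 0) (\<lambda>_. 0) vf (zeta_plus l \<zeta>0)
            \<and> (\<forall>p\<in>Mdom l. zeta_plus l \<zeta>0 p \<noteq> 0))
       \<and> (\<exists>\<zeta>0 \<zeta>1. majorana \<zeta>0 \<and> \<zeta>0 \<noteq> 0 \<and> majorana \<zeta>1 \<and> \<zeta>1 \<noteq> 0 \<and>
            (\<forall>a b :: real. (\<forall>p\<in>Mdom l. a *\<^sub>R zeta_plus l \<zeta>0 p + b *\<^sub>R zeta_plus l \<zeta>1 p = 0)
               \<longrightarrow> a = 0 \<and> b = 0))
       \<and> (\<forall>p\<in>Mdom l. \<forall>\<mu><3. \<forall>a\<in>{1,2}. omega1 (tauB l) (eB l) (mB l) tu eu \<mu> a p = 0)"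
proof (intro conjI)
  have P: "\<exists>t x1 x2. p = (t,x1,x2) \<and> proj_inverse (tauB l) (eB l) tu eu p \<and>
       (\<Sum>\<mu><3. tu \<mu> p * vf \<mu> p) = 0 \<and>
       (\<Sum>\<mu><3. eu \<mu> 1 p * vf \<mu> p) = - 3/2 * (x2 / l^2) \<and>
       (\<Sum>\<mu><3. eu \<mu> 2 p * vf \<mu> p) = - 3/2 * (- x1 / l^2)" if pM: "p \<in> Mdom l" for p
  proof -
    obtain t x1 x2 where p: "p = (t,x1,x2)" by (cases p) auto
    show ?thesis using inv vfield pM unfolding p by blast
  qed
  show "\<forall>p\<in>Mdom l. \<forall>\<mu><3. \<forall>a\<in>{1,2}. omega1 (tauB l) (eB l) (mB l) tu eu \<mu> a p = 0"
  proof (intro ballI allI impI)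
    fix p and \<mu> a :: nat assume pM: "p \<in> Mdom l" and mu: "\<mu> < 3" and a: "a \<in> {1::nat,2}"
    from P[OF pM] obtain t x1 x2 where p: "p = (t,x1,x2)" and i: "proj_inverse (tauB l) (eB l) tu eu p"
      and w0: "(\<Sum>\<mu><3. tu \<mu> p * vf \<mu> p) = 0"
      and w1: "(\<Sum>\<mu><3. eu \<mu> 1 p * vf \<mu> p) = - 3/2 * (x2 / l^2)"
      and w2: "(\<Sum>\<mu><3. eu \<mu> 2 p * vf \<mu> p) = - 3/2 * (- x1 / l^2)" by blast
    show "omega1 (tauB l) (eB l) (mB l) tu eu \<mu> a p = 0"
      using scalars2(8)[where tu=tu and eu=eu and vf=vf, OF l_pos pM p i w0 w1 w2 mu a] .
  qed
  show "\<exists>\<zeta>0 \<zeta>1. majorana \<zeta>0 \<and> \<zeta>0 \<noteq> 0 \<and> majorana \<zeta>1 \<and> \<zeta>1 \<noteq> 0 \<and>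
            (\<forall>a b :: real. (\<forall>p\<in>Mdom l. a *\<^sub>R zeta_plus l \<zeta>0 p + b *\<^sub>R zeta_plus l \<zeta>1 p = 0)
               \<longrightarrow> a = 0 \<and> b = 0)" by (rule indep[OF l_pos])
  show "\<forall>\<zeta>0. majorana \<zeta>0 \<and> \<zeta>0 \<noteq> 0 \<longrightarrow>
            Splus_solution (Mdom l) (tauB l) (eB l) (mB l) tu eu (\<lambda>_. 0) (\<lambda>_. 0) vf (zeta_plus l \<zeta>0)
            \<and> (\<forall>p\<in>Mdom l. zeta_plus l \<zeta>0 p \<noteq> 0)"
  proof (intro allI impI conjI)
    fix z assume zz: "majorana z \<and> z \<noteq> 0"
    then have mz: "majorana z" and nz: "z \<noteq> 0" by auto
    show "\<forall>p\<in>Mdom l. zeta_plus l z p \<noteq> 0" using zeta_nz[OF nz] by blast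
    show "Splus_solution (Mdom l) (tauB l) (eB l) (mB l) tu eu (\<lambda>_. 0) (\<lambda>_. 0) vf (zeta_plus l z)"
      unfolding Splus_solution_def Let_def
    proof (intro ballI conjI allI impI)
      fix p assume pM: "p \<in> Mdom l"
      from P[OF pM] obtain t x1 x2 where p: "p = (t,x1,x2)" and i: "proj_inverse (tauB l) (eB l) tu eu p"
        and w0: "(\<Sum>\<mu><3. tu \<mu> p * vf \<mu> p) = 0"
        and w1: "(\<Sum>\<mu><3. eu \<mu> 1 p * vf \<mu> p) = - 3/2 * (x2 / l^2)"
        and w2: "(\<Sum>\<mu><3. eu \<mu> 2 p * vf \<mu> p) = - 3/2 * (- x1 / l^2)" by blast
      note PT = point[where tu=tu and eu=eu and vf=vf, OF l_pos pM p i w0 w1 w2 mz]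
      note S2 = scalars2[where tu=tu and eu=eu and vf=vf, OF l_pos pM p i w0 w1 w2]
      show "majorana (zeta_plus l z p)" by (rule majorana_zeta[OF mz])
      show "((4 * 0 + (tau_ab (tauB l) eu 1 2 p - tau_ab (tauB l) eu 2 1 p)) *\<^sub>R gam 0) *v zeta_plus l z p = 0"
        using PT(1) by simp
      show "((\<Sum>a\<in>{1,2}. (3/2 * tau_0a (tauB l) tu eu a p) *\<^sub>R gam2 a 0)
        - (\<Sum>a\<in>{1,2}. (\<Sum>\<mu><3. eu \<mu> a p * vf \<mu> p) *\<^sub>R gam a)
        + Re 0 *\<^sub>R gam 0 - Im 0 *\<^sub>R mat 1) *v zeta_plus l z p = 0"
        using PT(2) by simp
      fix \<mu> :: nat assume mu: "\<mu> < 3"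
      show "((\<Sum>a\<in>{1,2}. omega1 (tauB l) (eB l) (mB l) tu eu \<mu> a p *\<^sub>R gam2 a 0)
               + (\<Sum>a\<in>{1,2}. (1/3 * eB l \<mu> a p * (\<Sum>\<mu><3. tu \<mu> p * vf \<mu> p)) *\<^sub>R gam a)) *v zeta_plus l z p = 0"
        using S2(8)[OF mu] by (simp add: w0)
      show "((\<lambda>s. zeta_plus l z (shift \<mu> s p)) has_vector_derivative
          ((( - (1/4 * tau_0mu (tauB l) tu \<mu> p)) *\<^sub>R mat 1
            - (1/2 * vf \<mu> p) *\<^sub>R gam 0
            + (\<Sum>a\<in>{1,2}. \<Sum>b\<in>{1,2}. (1/6 * eB l \<mu> a p * (\<Sum>\<mu><3. eu \<mu> b p * vf \<mu> p)) *\<^sub>R (gam a ** gam b ** gam 0))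
            + (1/3 * tauB l \<mu> p * (\<Sum>\<mu><3. tu \<mu> p * vf \<mu> p)) *\<^sub>R gam 0
            - (1/6 * Re 0) *\<^sub>R (\<Sum>a\<in>{1,2}. eB l \<mu> a p *\<^sub>R gam a)
            - (1/6 * Im 0) *\<^sub>R (\<Sum>a\<in>{1,2}. eB l \<mu> a p *\<^sub>R gam2 a 0)) *v zeta_plus l z p
           - ((1/4::real) *\<^sub>R (\<Sum>a\<in>{1,2}. \<Sum>b\<in>{1,2}. omega2 (tauB l) (eB l) (mB l) eu \<mu> a b p *\<^sub>R gam2 a b)) *v zeta_plus l z p))
        (at 0)"
        by (rule deriv_goal[OF matpart[where tu=tu and eu=eu and vf=vf, OF l_pos pM p i w0 w1 w2 mu] zeta_deriv[OF l_pos pM]])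
    qed
  qed
qed


end
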